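(* Let $\mu\in\mathbb{C}$ with $\operatorname{Re}(\mu)>-1$, let $0<\xi<1$, $a>0$ and $y>0$. Then $$\int_{0}^{\infty}x^{\mu}\exp(-a x^{\xi})\cos(xy)\,dx=-y^{-\mu-1}\sum_{\ell=0}^{\infty}\frac{1}{\ell!}\left(-\frac{a}{y^{\xi}}\right)^{\ell}\Gamma(\mu+1+\xi\ell)\,\sin\!\left\{\frac{\pi}{2}(\mu+\xi\ell)\right\},$$ where the series on the right converges.
   Context: $\Gamma$ denotes Euler's Gamma function; $x^{\mu}=e^{\mu\log x}$ for $x>0$ (principal branch). *)

theory Defs
  imports "HOL-Analysis.Analysis"
begin

end

theory Submission
  imports Defs
begin


lemma scale_integral_pos:
  fixes f :: "real \<Rightarrow> complex"
  assumes f: "f absolutely_integrable_on {0<..}" and r: "r > 0"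
  shows "((\<lambda>x. f (r*x)) has_integral (integral {0<..} f / of_real r)) {0<..}"
    and "(\<lambda>x. f (r*x)) absolutely_integrable_on {0<..}"
proof -
  define F where "F = (\<lambda>x. indicator {0<..} x *\<^sub>R f x)"
  have iF: "integrable lebesgue F" using f unfolding set_integrable_def F_def .
  have hb: "has_bochner_integral lebesgue F (integral\<^sup>L lebesgue F)"
    using iF by (simp add: has_bochner_integral_iff)
  have "has_bochner_integral lebesgue (\<lambda>x. F (0 + r * x)) (integral\<^sup>L lebesgue F /\<^sub>R \<bar>r\<bar>)"
    using has_bochner_integral_lebesgue_real_affine_iff[of r F "integral\<^sup>L lebesgue F" 0] hb r by simp
  moreover have "(\<lambda>x. F (0 + r * x)) = (\<lambda>x. indicator {0<..} x *\<^sub>R f (r*x))"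
    using r by (auto simp: F_def indicator_def fun_eq_iff zero_less_mult_iff)
  ultimately have hb2: "has_bochner_integral lebesgue (\<lambda>x. indicator {0<..} x *\<^sub>R f (r*x)) (integral\<^sup>L lebesgue F /\<^sub>R \<bar>r\<bar>)"
    by simp
  hence si: "set_integrable lebesgue {0<..} (\<lambda>x. f (r*x))"
    unfolding set_integrable_def by (simp add: has_bochner_integral_iff)
  thus "(\<lambda>x. f (r*x)) absolutely_integrable_on {0<..}" .
  have "(LINT x:{0<..}|lebesgue. f (r*x)) = integral\<^sup>L lebesgue F /\<^sub>R \<bar>r\<bar>"
    using hb2 unfolding set_lebesgue_integral_def by (simp add: has_bochner_integral_iff)
  moreover have "integral\<^sup>L lebesgue F = integral {0<..} f"
    using set_lebesgue_integral_eq_integral(2)[OF f] unfolding set_lebesgue_integral_def F_def by simp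
  ultimately show "((\<lambda>x. f (r*x)) has_integral (integral {0<..} f / of_real r)) {0<..}"
    using has_integral_set_lebesgue[OF si] r by (simp add: scaleR_conv_of_real divide_inverse mult.commute)
qed



lemma Gamma_pos_int:
  fixes s :: complex assumes "Re s > 0"
  shows "((\<lambda>t. of_real t powr (s - 1) / of_real (exp t)) has_integral Gamma s) {0<..}"
    "(\<lambda>t. of_real t powr (s - 1) / of_real (exp t)) absolutely_integrable_on {0<..}"
proof -
  show ai: "(\<lambda>t. of_real t powr (s - 1) / of_real (exp t)) absolutely_integrable_on {0<..}"
    using absolutely_integrable_Gamma_integral[OF assms, of 1] by simp
  have "integral {0<..} (\<lambda>t. of_real t powr (s - 1) / of_real (exp t)) = integral {0..} (\<lambda>t. of_real t powr (s - 1) / of_real (exp t))"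
    by (rule integral_spike_set) (auto intro: negligible_subset[of "{0}"])
  also have "\<dots> = Gamma s" using Gamma_integral_complex[OF assms] by (rule integral_unique)
  finally show "((\<lambda>t. of_real t powr (s - 1) / of_real (exp t)) has_integral Gamma s) {0<..}"
    using ai set_lebesgue_integral_eq_integral(1) has_integral_integrable_integral by metis
qed

lemma laplace_real:
  fixes s :: complex assumes s: "Re s > 0" and r: "r > 0"
  shows "((\<lambda>x. of_real x powr (s - 1) * exp (- (of_real r * of_real x))) has_integral Gamma s * of_real r powr (-s)) {0<..}"
    "(\<lambda>x. of_real x powr (s - 1) * exp (- (of_real r * of_real x))) absolutely_integrable_on {0<..}"
proof -
  define f where "f = (\<lambda>t. of_real t powr (s - 1) / of_real (exp t) :: complex)"
  note G = Gamma_pos_int[OF s, folded f_def]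
  have I: "integral {0<..} f = Gamma s" using G(1) by (rule integral_unique)
  note sc = scale_integral_pos[OF G(2) r]
  have eq: "f (r * x) = of_real r powr (s - 1) * (of_real x powr (s - 1) * exp (- (of_real r * of_real x)))"
    if "x > 0" for x
  proof -
    have "of_real (r * x) powr (s - 1) = of_real r powr (s-1) * of_real x powr (s - 1)"
      using r that by (simp add: powr_times_real)
    moreover have "1 / complex_of_real (exp (r*x)) = exp (- (of_real r * of_real x))"
      by (simp add: exp_of_real[symmetric] exp_minus field_simps)
    ultimately show ?thesis unfolding f_def by (simp add: field_simps)
  qed
  have nz: "of_real r powr (s - 1) \<noteq> (0::complex)" using r by simp
  have h1: "((\<lambda>x. of_real r powr (s - 1) * (of_real x powr (s - 1) * exp (- (of_real r * of_real x)))) has_integral Gamma s / of_real r) {0<..}"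
    using sc(1) unfolding I by (rule has_integral_eq[rotated]) (auto simp: eq)
  have "((\<lambda>x. (1 / of_real r powr (s - 1)) * (of_real r powr (s - 1) * (of_real x powr (s - 1) * exp (- (of_real r * of_real x))))) has_integral (1 / of_real r powr (s - 1)) * (Gamma s / of_real r)) {0<..}"
    by (rule has_integral_mult_right[OF h1])
  moreover have "(1 / of_real r powr (s - 1)) * (Gamma s / of_real r) = Gamma s * of_real r powr (-s)"
    using r by (simp add: powr_diff powr_minus field_simps)
  ultimately show "((\<lambda>x. of_real x powr (s - 1) * exp (- (of_real r * of_real x))) has_integral Gamma s * of_real r powr (-s)) {0<..}"
    using nz by simp
  have "(\<lambda>x. (1 / of_real r powr (s - 1)) * f (r*x)) absolutely_integrable_on {0<..}"
    using sc(2) by (intro set_integrable_mult_right) 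
  thus "(\<lambda>x. of_real x powr (s - 1) * exp (- (of_real r * of_real x))) absolutely_integrable_on {0<..}"
    apply (rule set_integrable_cong[THEN iffD1, rotated -1]) using nz by (auto simp: eq)
qed



lemma powr_shift_real:
  fixes s :: complex assumes "x > 0"
  shows "complex_of_real x powr (s + of_nat n - 1) = of_real x powr (s - 1) * of_real x ^ n"
proof -
  have "complex_of_real x powr (s + of_nat n - 1) = of_real x powr ((s - 1) + of_nat n)"
    by (simp add: algebra_simps)
  also have "\<dots> = of_real x powr (s - 1) * of_real x powr (of_nat n)"
    using assms by (simp add: powr_add)
  also have "of_real x powr (of_nat n) = (of_real x :: complex) ^ n"
    using assms by (intro powr_nat') simp
  finally show ?thesis .
qed

lemma Gamma_shift:
  fixes s :: complex assumes "Re s > 0"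
  shows "Gamma (s + of_nat n) = Gamma s * pochhammer s n"
proof -
  have "s \<notin> \<int>\<^sub>\<le>\<^sub>0" using assms by (auto elim!: nonpos_Ints_cases)
  hence "Gamma s \<noteq> 0" by (simp add: Gamma_eq_zero_iff)
  thus ?thesis using pochhammer_Gamma[OF \<open>s \<notin> \<int>\<^sub>\<le>\<^sub>0\<close>, of n] by simp
qed

lemma exp_partial_le:
  fixes t :: real assumes "t \<ge> 0"
  shows "(\<Sum>n<N. t ^ n / fact n) \<le> exp t"
proof -
  have "(\<lambda>n. t^n /\<^sub>R fact n) sums exp t" by (rule exp_converges)
  hence "(\<lambda>n. t^n / fact n) sums exp t" by (simp add: divide_inverse mult.commute)
  hence "summable (\<lambda>n. t^n / fact n)" "suminf (\<lambda>n. t^n / fact n) = exp t" by (auto simp: sums_iff)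
  moreover have "sum (\<lambda>n. t^n / fact n) {..<N} \<le> suminf (\<lambda>n. t^n / fact n)"
    using assms \<open>summable _\<close> by (intro sum_le_suminf) auto
  ultimately show ?thesis by simp
qed



lemma binom_coeff_eq:
  fixes s w :: complex assumes "Re s > 0" "r > 0"
  shows "(-w)^n / fact n * (Gamma (s + of_nat n) * of_real r powr (-(s + of_nat n)))
       = Gamma s * of_real r powr (-s) * (((-s) gchoose n) * (w / of_real r)^n)"
proof -
  have rn0: "complex_of_real r powr (-(s + of_nat n)) * of_real r powr (of_nat n) = of_real r powr (-s)"
    by (simp only: powr_add[symmetric]) simp
  have rn1: "complex_of_real r powr (of_nat n) = of_real r ^ n"
    using assms(2) by (intro powr_nat') simp
  have rn: "complex_of_real r powr (-(s + of_nat n)) = of_real r powr (-s) / of_real r ^ n"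
    using rn0 rn1 assms(2) by (simp add: field_simps)
  have g: "(-s) gchoose n = (-1)^n * pochhammer s n / fact n"
    by (simp add: gbinomial_pochhammer)
  show ?thesis unfolding rn Gamma_shift[OF assms(1)] g using assms(2)
    by (simp add: power_divide power_minus[of w] field_simps)
qed

lemma laplace_complex:
  fixes s z :: complex assumes s: "Re s > 0" and z: "Re z > 0"
  shows "((\<lambda>x. of_real x powr (s - 1) * exp (- (z * of_real x))) has_integral Gamma s * z powr (-s)) {0<..}"
proof -
  define r where "r = (cmod z)^2 / Re z"
  define w where "w = z - of_real r"
  define q where "q = cmod w"
  have zne: "z \<noteq> 0" using z by auto
  have r: "r > 0" using z zne unfolding r_def by auto
  have "q^2 = (Re z - r)^2 + (Im z)^2" unfolding q_def w_def by (simp add: cmod_power2)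
  also have "\<dots> = ((Re z)^2 + (Im z)^2) - 2*(r*Re z) + r^2"
    by (simp add: power2_eq_square algebra_simps)
  also have "r * Re z = (cmod z)^2" using z unfolding r_def by simp
  also have "(Re z)^2 + (Im z)^2 = (cmod z)^2" by (simp add: cmod_power2)
  also have "(cmod z)^2 - 2*(cmod z)^2 + r^2 = r^2 - (cmod z)^2" by simp
  also have "\<dots> < r^2" using zne by simp
  finally have "q^2 < r^2" .
  hence qr: "q < r" using r by (smt (verit) power_mono q_def norm_ge_zero)
  have q0: "q \<ge> 0" unfolding q_def by simp
  define A where "A = (\<lambda>x. of_real x powr (s - 1) * exp (- (of_real r * of_real x)) :: complex)"
  define f where "f = (\<lambda>N x. \<Sum>n<N. A x * ((- w * of_real x)^n / fact n))"
  define c where "c = (\<lambda>n. (-w)^n / fact n * (Gamma (s + of_nat n) * of_real r powr (-(s + of_nat n))))"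
  define g where "g = (\<lambda>x. of_real x powr (s - 1) * exp (- (z * of_real x)))"
  define h where "h = (\<lambda>x. x powr (Re s - 1) * exp (- ((r - q) * x)))"
  have fint: "(f N has_integral (\<Sum>n<N. c n)) {0<..}" for N
    unfolding f_def
  proof (rule has_integral_sum)
    fix n assume "n \<in> {..<N}"
    have sn: "Re (s + of_nat n) > 0" using s by simp
    have "((\<lambda>x. (-w)^n / fact n * (of_real x powr (s + of_nat n - 1) * exp (- (of_real r * of_real x)))) has_integral c n) {0<..}"
      unfolding c_def by (intro has_integral_mult_right laplace_real(1)[OF sn r])
    thus "((\<lambda>x. A x * ((- w * of_real x)^n / fact n)) has_integral c n) {0<..}"
      by (rule has_integral_eq[rotated]) (simp add: A_def powr_shift_real flip: power_mult_distrib)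
  qed auto
  have hint: "h integrable_on {0<..}"
  proof -
    have "Re (complex_of_real (Re s)) > 0" using s by simp
    from laplace_real(2)[OF this, of "r - q"] qr
    have "(\<lambda>x. norm (of_real x powr (of_real (Re s) - 1) * exp (- (of_real (r - q) * of_real x)) :: complex)) integrable_on {0<..}"
      by (simp add: absolutely_integrable_on_def)
    thus ?thesis
      by (rule integrable_eq) (simp add: h_def norm_mult norm_powr_real_powr exp_of_real[symmetric] del: of_real_diff)
  qed
  have bound: "norm (f N x) \<le> h x" if x: "x \<in> {0<..}" for N x
  proof -
    have "f N x = A x * (\<Sum>n<N. (- w * of_real x)^n / fact n)"
      unfolding f_def by (simp add: sum_distrib_left)
    hence "norm (f N x) = norm (A x) * norm (\<Sum>n<N. (- w * of_real x)^n / fact n)"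
      by (simp add: norm_mult)
    also have "norm (A x) = x powr (Re s - 1) * exp (- (r * x))"
      using x by (simp add: A_def norm_mult norm_powr_real_powr exp_of_real[symmetric] del: of_real_mult)
    also have "norm (\<Sum>n<N. (- w * of_real x)^n / fact n) \<le> (\<Sum>n<N. (q * x)^n / fact n)"
      by (rule order.trans[OF norm_sum]) (use x in \<open>simp add: norm_divide norm_power norm_mult q_def\<close>)
    also have "\<dots> \<le> exp (q * x)" using x q0 by (intro exp_partial_le) simp
    finally have "norm (f N x) \<le> x powr (Re s - 1) * exp (- (r * x)) * exp (q * x)"
      by (simp add: mult_left_mono)
    also have "\<dots> = h x" by (simp add: h_def algebra_simps flip: exp_add)
    finally show ?thesis .
  qed
  have conv: "(\<lambda>N. f N x) \<longlonglongrightarrow> g x" if x: "x \<in> {0<..}" for x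
  proof -
    have "(\<lambda>n. (- w * of_real x)^n /\<^sub>R fact n) sums exp (- w * of_real x)" by (rule exp_converges)
    hence "(\<lambda>n. (- w * of_real x)^n / fact n) sums exp (- w * of_real x)"
      by (simp add: scaleR_conv_of_real divide_inverse mult.commute)
    hence "(\<lambda>n. A x * ((- w * of_real x)^n / fact n)) sums (A x * exp (- w * of_real x))"
      by (rule sums_mult)
    moreover have "A x * exp (- w * of_real x) = g x"
      by (simp add: A_def g_def w_def mult.assoc flip: exp_add) (simp add: algebra_simps)
    ultimately show ?thesis unfolding f_def sums_def by simp
  qed
  have fi: "f N integrable_on {0<..}" for N using fint by blast
  note DC = dominated_convergence[OF fi hint bound conv]
  have "(\<lambda>N. \<Sum>n<N. c n) \<longlonglongrightarrow> integral {0<..} g"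
  proof -
    have "integral {0<..} (f N) = (\<Sum>n<N. c n)" for N using fint[of N] by (rule integral_unique)
    thus ?thesis using DC(2) by simp
  qed
  hence c1: "c sums integral {0<..} g" unfolding sums_def .
  have "norm (w / of_real r) < 1" using qr r by (simp add: q_def norm_divide)
  from gen_binomial_complex[OF this, of "-s"]
  have "(\<lambda>n. Gamma s * of_real r powr (-s) * (((-s) gchoose n) * (w / of_real r)^n)) sums (Gamma s * of_real r powr (-s) * (1 + w / of_real r) powr (-s))"
    by (rule sums_mult)
  moreover have "of_real r powr (-s) * (1 + w / of_real r) powr (-s) = z powr (-s)"
    using r by (subst powr_times_real_left[symmetric]) (auto simp: w_def field_simps)
  ultimately have c2: "c sums (Gamma s * z powr (-s))"
    unfolding c_def using binom_coeff_eq[OF s r] by (simp add: mult.assoc)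
  have "integral {0<..} g = Gamma s * z powr (-s)" using c1 c2 sums_unique2 by blast
  thus ?thesis using DC(1) unfolding g_def by (metis integrable_integral)
qed



lemma laplace_rr:
  fixes p b :: real assumes p: "p > -1" and b: "b > 0"
  shows "((\<lambda>x. x powr p * exp (- (b * x))) has_integral Gamma (p + 1) * b powr (-(p + 1))) {0<..}"
proof -
  have "Re (complex_of_real (p + 1)) > 0" using p by simp
  note H = has_integral_Re[OF laplace_real(1)[OF this b]]
  have ev: "Re (Gamma (of_real (p + 1)) * of_real b powr (- of_real (p + 1))) = Gamma (p + 1) * b powr (-(p + 1))"
  proof -
    have e1: "of_real b powr (- of_real (p + 1)) = (of_real (b powr (-(p+1))) :: complex)"
      using powr_of_real[of b "-(p+1)"] b by (simp only: of_real_minus)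
    show ?thesis unfolding e1 Gamma_complex_of_real by (metis Re_complex_of_real of_real_mult)
  qed
  have ep: "Re (of_real x powr (of_real (p + 1) - 1) * exp (- (of_real b * of_real x))) = x powr p * exp (- (b * x))"
    if "x \<in> {0<..}" for x
  proof -
    from that have x: "x > 0" by simp
    have "of_real x powr (of_real (p + 1) - 1) * exp (- (of_real b * of_real x)) = (of_real (x powr p * exp (- (b * x))) :: complex)"
      using x by (simp add: powr_of_real[symmetric] exp_of_real[symmetric])
    thus ?thesis by (metis Re_complex_of_real)
  qed
  show ?thesis by (rule has_integral_eq[OF ep H[unfolded ev]])
qed

lemma ineq_powr_lin:
  fixes a e \<xi> :: real assumes a: "a > 0" and e: "e > 0" and \<xi>: "0 < \<xi>" "\<xi> < 1"
  shows "\<exists>C. \<forall>x\<ge>0. a * x powr \<xi> \<le> e * x + C"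
proof -
  define X where "X = (a / e) powr (1 / (1 - \<xi>))"
  have X: "X > 0" using a e by (simp add: X_def)
  have XX: "X powr (1 - \<xi>) = a / e" using a e \<xi> by (simp add: X_def powr_powr)
  show ?thesis
  proof (intro exI allI impI)
    fix x :: real assume x: "x \<ge> 0"
    show "a * x powr \<xi> \<le> e * x + a * X powr \<xi>"
    proof (cases "x \<le> X")
      case True
      hence "x powr \<xi> \<le> X powr \<xi>" using x \<xi> by (intro powr_mono2) auto
      hence "a * x powr \<xi> \<le> a * X powr \<xi>" using a by (intro mult_left_mono) auto
      moreover have "e * x \<ge> 0" using e x by simp
      ultimately show ?thesis by linarith
    next
      case False
      hence "X powr (1 - \<xi>) \<le> x powr (1 - \<xi>)" using X \<xi> by (intro powr_mono2) auto
      hence "a / e \<le> x powr (1 - \<xi>)" using XX by simp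
      hence "a \<le> e * x powr (1 - \<xi>)" using e by (simp add: field_simps)
      hence "a * x powr \<xi> \<le> e * x powr (1 - \<xi>) * x powr \<xi>" by (simp add: mult_right_mono)
      also have "\<dots> = e * x" using False X by (simp add: mult.assoc powr_add[symmetric])
      finally have "a * x powr \<xi> \<le> e * x" .
      moreover have "a * X powr \<xi> \<ge> 0" using a X by simp
      ultimately show ?thesis by linarith
    qed
  qed
qed

lemma exp_pow_le:
  fixes t :: real assumes "t \<ge> 0"
  shows "t ^ k / fact k \<le> exp t"
proof -
  have "t ^ k / fact k \<le> (\<Sum>n<Suc k. t ^ n / fact n)"
    using assms by (intro member_le_sum) auto
  also have "\<dots> \<le> exp t" using assms by (rule exp_partial_le)
  finally show ?thesis .
qed

lemma S0: "({0<..}::real set) \<in> sets lebesgue"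
  using borel_open[of "{0<..}::real set"] by (simp add: sets_completionI_sets)

lemma integrable_h0:
  fixes \<sigma> a \<xi> :: real assumes s: "\<sigma> > -1" and a: "a > 0" and \<xi>: "\<xi> > 0"
  shows "(\<lambda>x. x powr \<sigma> * exp (- (a * x powr \<xi>))) integrable_on {0<..}"
proof -
  define k where "k = nat \<lceil>(\<sigma> + 2) / \<xi>\<rceil>"
  have "(\<sigma> + 2) / \<xi> \<le> real k" unfolding k_def by (rule real_nat_ceiling_ge)
  hence k: "\<xi> * k \<ge> \<sigma> + 2" using \<xi> by (simp add: pos_divide_le_eq mult.commute)
  define K where "K = fact k / a ^ k"
  define g where "g = (\<lambda>x::real. if x \<le> 1 then x powr \<sigma> else K * x powr (\<sigma> - \<xi> * k))"
  have g1: "g integrable_on {0<..1}"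
    using integrable_on_powr_from_0'[OF s, of 1] by (rule integrable_eq) (auto simp: g_def)
  have "(\<lambda>x. K * x powr (\<sigma> - \<xi> * k)) integrable_on {1..}"
  proof -
    have "(\<lambda>x. x powr (\<sigma> - \<xi> * k)) integrable_on {1..}"
      using has_integral_powr_to_inf[of "\<sigma> - \<xi> * k" 1] k by (auto simp: integrable_on_def)
    thus ?thesis by (rule integrable_on_mult_right)
  qed
  hence g2: "g integrable_on {1..}"
    by (rule integrable_spike_finite[where S="{1}", rotated 2]) (auto simp: g_def)
  have gi: "g integrable_on {0<..}"
  proof (rule integrable_Un'[OF g1 g2])
    show "negligible ({0<..1} \<inter> {1..} :: real set)"
      by (rule negligible_subset[of "{1}"]) auto
  qed auto
  show ?thesis
  proof (rule measurable_bounded_by_integrable_imp_integrable_real[OF _ gi])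
    show "(\<lambda>x. x powr \<sigma> * exp (- (a * x powr \<xi>))) \<in> borel_measurable (lebesgue_on {0<..})"
      by (intro continuous_imp_measurable_on_sets_lebesgue continuous_intros) auto
    show "({0<..}::real set) \<in> sets lebesgue" by (rule S0)
    fix x :: real assume "x \<in> {0<..}"
    hence x: "x > 0" by simp
    show "\<bar>x powr \<sigma> * exp (- (a * x powr \<xi>))\<bar> \<le> g x"
    proof (cases "x \<le> 1")
      case True
      have "x powr \<sigma> * exp (- (a * x powr \<xi>)) \<le> x powr \<sigma> * 1"
        using a x by (intro mult_left_mono) auto
      thus ?thesis using True by (simp add: g_def)
    next
      case False
      have "(a * x powr \<xi>) ^ k / fact k \<le> exp (a * x powr \<xi>)"
        using a x by (intro exp_pow_le) auto
      moreover have "(a * x powr \<xi>) ^ k = a ^ k * x powr (\<xi> * k)"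
      proof -
        have "(x powr \<xi>) ^ k = (x powr \<xi>) powr (real k)" using x by (simp add: powr_realpow)
        also have "\<dots> = x powr (\<xi> * k)" by (simp add: powr_powr)
        finally show ?thesis by (simp add: power_mult_distrib)
      qed
      ultimately have "a ^ k * x powr (\<xi> * k) / fact k \<le> exp (a * x powr \<xi>)" by simp
      hence "a ^ k * x powr (\<xi> * k) \<le> fact k * exp (a * x powr \<xi>)"
        by (simp add: divide_le_eq mult.commute)
      hence "exp (- (a * x powr \<xi>)) \<le> K * x powr (- (\<xi> * k))"
        using a x by (simp add: K_def exp_minus powr_minus field_simps)
      hence "x powr \<sigma> * exp (- (a * x powr \<xi>)) \<le> x powr \<sigma> * (K * x powr (- (\<xi> * k)))"
        by (intro mult_left_mono) auto
      also have "\<dots> = K * x powr (\<sigma> - \<xi> * k)" using x by (simp add: powr_diff powr_minus field_simps)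
      finally show ?thesis using False by (simp add: g_def)
    qed
  qed
qed



lemma gamma_norm_le:
  fixes s :: complex assumes s: "Re s > 0"
  shows "norm (Gamma s) \<le> Gamma (Re s)"
proof -
  note G = Gamma_integral_complex[OF s]
  note R = Gamma_integral_real[of "Re s"]
  have "norm (integral {0..} (\<lambda>t. of_real t powr (s - 1) / of_real (exp t))) \<le> integral {0..} (\<lambda>t. t powr (Re s - 1) / exp t)"
  proof (rule integral_norm_bound_integral)
    show "(\<lambda>t. of_real t powr (s - 1) / of_real (exp t)) integrable_on {0..}" using G by blast
    show "(\<lambda>t. t powr (Re s - 1) / exp t) integrable_on {0..}" using R s by blast
    fix t :: real assume "t \<in> {0..}"
    thus "norm (of_real t powr (s - 1) / of_real (exp t)) \<le> t powr (Re s - 1) / exp t"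
      by (simp add: norm_divide norm_powr_real_powr)
  qed
  thus ?thesis using G R s by (simp add: integral_unique)
qed

lemma powr_norm_bound:
  fixes z s :: complex assumes z: "Re z \<ge> 0" and y: "y > 0" "cmod z \<ge> y" and s: "Re s > 0"
  shows "norm (z powr (-s)) \<le> y powr (-Re s) * exp (pi / 2 * \<bar>Im s\<bar>)"
proof -
  have z0: "z \<noteq> 0" using y by auto
  have "norm (z powr (-s)) = exp (- (Re s * ln (cmod z)) + Im s * Im (Ln z))"
    using z0 by (simp add: powr_def Re_Ln)
  also have "\<dots> \<le> exp (- (Re s * ln y) + pi / 2 * \<bar>Im s\<bar>)"
  proof -
    have "cmod z > 0" using y by linarith
    hence "ln y \<le> ln (cmod z)" using y by (subst ln_le_cancel_iff) auto
    hence f1: "Re s * ln y \<le> Re s * ln (cmod z)" using s by (intro mult_left_mono) auto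
    have "\<bar>Im (Ln z)\<bar> \<le> pi / 2" using Re_Ln_pos_le[OF z0] z by simp
    hence "\<bar>Im s\<bar> * \<bar>Im (Ln z)\<bar> \<le> \<bar>Im s\<bar> * (pi / 2)" by (intro mult_left_mono) auto
    moreover have "Im s * Im (Ln z) \<le> \<bar>Im s\<bar> * \<bar>Im (Ln z)\<bar>"
      by (metis abs_ge_self abs_mult)
    ultimately have "Im s * Im (Ln z) \<le> pi / 2 * \<bar>Im s\<bar>" by (simp add: mult.commute)
    with f1 show ?thesis by simp
  qed
  also have "\<dots> = y powr (-Re s) * exp (pi / 2 * \<bar>Im s\<bar>)"
    using y by (simp add: powr_def flip: exp_add)
  finally show ?thesis .
qed

lemma term_integral:
  fixes s :: complex assumes s: "Re s > 0" and e: "e > 0"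
  shows "((\<lambda>x. of_real x powr (s - 1) * of_real (exp (- (e * x))) * of_real (cos (x * y))) has_integral
     Gamma s * ((of_real e - \<i> * of_real y) powr (-s) + (of_real e + \<i> * of_real y) powr (-s)) / 2) {0<..}"
proof -
  have z1: "Re (of_real e - \<i> * of_real y) > 0" "Re (of_real e + \<i> * of_real y) > 0" using e by auto
  note L1 = laplace_complex[OF s z1(1)] and L2 = laplace_complex[OF s z1(2)]
  have "((\<lambda>x. (of_real x powr (s - 1) * exp (- ((of_real e - \<i> * of_real y) * of_real x)) +
               of_real x powr (s - 1) * exp (- ((of_real e + \<i> * of_real y) * of_real x))) / 2) has_integral
        (Gamma s * (of_real e - \<i> * of_real y) powr (-s) + Gamma s * (of_real e + \<i> * of_real y) powr (-s)) / 2) {0<..}"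
    by (intro has_integral_divide has_integral_add L1 L2)
  moreover have "(Gamma s * (of_real e - \<i> * of_real y) powr (-s) + Gamma s * (of_real e + \<i> * of_real y) powr (-s)) / 2
     = Gamma s * ((of_real e - \<i> * of_real y) powr (-s) + (of_real e + \<i> * of_real y) powr (-s)) / 2"
    by (simp add: algebra_simps)
  ultimately have H: "((\<lambda>x. (of_real x powr (s - 1) * exp (- ((of_real e - \<i> * of_real y) * of_real x)) +
               of_real x powr (s - 1) * exp (- ((of_real e + \<i> * of_real y) * of_real x))) / 2) has_integral
        Gamma s * ((of_real e - \<i> * of_real y) powr (-s) + (of_real e + \<i> * of_real y) powr (-s)) / 2) {0<..}"
    by simp
  show ?thesis
  proof (rule has_integral_eq[OF _ H], goal_cases)
    case (1 x)
    have "of_real (cos (x * y)) = (exp (\<i> * of_real (x*y)) + exp (- (\<i> * of_real (x*y)))) / (2::complex)"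
      by (simp add: cos_exp_eq cos_of_real[symmetric])
    moreover have "exp (- ((of_real e - \<i> * of_real y) * of_real x)) = of_real (exp (- (e * x))) * exp (\<i> * of_real (x*y))"
      by (simp add: exp_of_real[symmetric] algebra_simps flip: exp_add)
    moreover have "exp (- ((of_real e + \<i> * of_real y) * of_real x)) = of_real (exp (- (e * x))) * exp (- (\<i> * of_real (x*y)))"
      by (simp add: exp_of_real[symmetric] algebra_simps flip: exp_add)
    ultimately show ?case by (simp add: algebra_simps add_divide_distrib)
  qed
qed



lemma powr_s_split:
  fixes \<mu> :: complex assumes x: "x > 0"
  shows "complex_of_real x powr (\<mu> + 1 + of_real (\<xi> * real l) - 1) = of_real x powr \<mu> * of_real ((x powr \<xi>) ^ l)"
proof -
  have "complex_of_real x powr (\<mu> + 1 + of_real (\<xi> * real l) - 1) = of_real x powr (\<mu> + of_real (\<xi> * real l))"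
    by simp
  also have "\<dots> = of_real x powr \<mu> * of_real x powr (of_real (\<xi> * real l))"
    by (simp add: powr_add)
  also have "of_real x powr (of_real (\<xi> * real l)) = (of_real (x powr (\<xi> * real l)) :: complex)"
    by (rule powr_of_real) (use x in auto)
  also have "x powr (\<xi> * real l) = (x powr \<xi>) powr (real l)" by (simp add: powr_powr)
  also have "\<dots> = (x powr \<xi>) ^ l" using x by (simp add: powr_realpow)
  finally show ?thesis .
qed

lemma stepB:
  fixes \<mu> :: complex and \<xi> a y e :: real
  assumes mu: "Re \<mu> > -1" and xi: "0 < \<xi>" "\<xi> < 1" and a: "a > 0" and e: "e > 0"
  defines "s \<equiv> \<lambda>l::nat. \<mu> + 1 + of_real (\<xi> * real l)"
  defines "F \<equiv> \<lambda>x::real. of_real x powr \<mu> * of_real (exp (- a * x powr \<xi>)) * of_real (cos (x * y)) * of_real (exp (- (e * x)))"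
  shows "F integrable_on {0<..}"
    "(\<lambda>l. (of_real (-a))^l / fact l * (Gamma (s l) * ((of_real e - \<i> * of_real y) powr (-(s l)) + (of_real e + \<i> * of_real y) powr (-(s l))) / 2)) sums integral {0<..} F"
proof -
  define c where "c = (\<lambda>l::nat. (of_real (-a))^l / fact l :: complex)"
  define K where "K = (\<lambda>l. Gamma (s l) * ((of_real e - \<i> * of_real y) powr (-(s l)) + (of_real e + \<i> * of_real y) powr (-(s l))) / 2)"
  define u where "u = (\<lambda>l x. of_real x powr (s l - 1) * of_real (exp (- (e * x))) * complex_of_real (cos (x * y)))"
  define P where "P = (\<lambda>N x. \<Sum>l<N. c l * u l x)"
  define B where "B = (\<lambda>x. of_real x powr \<mu> * of_real (exp (- (e * x))) * complex_of_real (cos (x * y)))"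
  have sl: "Re (s l) > 0" for l
  proof -
    have "\<xi> * real l \<ge> 0" using xi by simp
    thus ?thesis using mu by (simp add: s_def)
  qed
  have uint: "(u l has_integral K l) {0<..}" for l
    unfolding u_def K_def by (rule term_integral[OF sl e])
  have Pint: "(P N has_integral (\<Sum>l<N. c l * K l)) {0<..}" for N
    unfolding P_def by (intro has_integral_sum has_integral_mult_right uint) auto
  have Peq: "P N x = B x * (\<Sum>l<N. of_real (- a * x powr \<xi>) ^ l / fact l)" if x: "x > 0" for N x
  proof -
    have "c l * u l x = B x * (of_real (- a * x powr \<xi>) ^ l / fact l)" for l
      unfolding c_def u_def B_def s_def powr_s_split[OF x] by (simp add: mult_ac flip: power_mult_distrib)
    thus ?thesis unfolding P_def by (simp add: sum_distrib_left)
  qed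
  obtain C where C: "\<And>x. x \<ge> 0 \<Longrightarrow> a * x powr \<xi> \<le> (e/2) * x + C"
    using ineq_powr_lin[OF a _ xi, of "e/2"] e by auto
  define h where "h = (\<lambda>x. exp C * (x powr Re \<mu> * exp (- ((e/2) * x))))"
  have hint: "h integrable_on {0<..}"
  proof -
    have "(\<lambda>x. x powr Re \<mu> * exp (- ((e/2) * x))) integrable_on {0<..}"
      using laplace_rr[OF mu, of "e/2"] e by (auto simp: integrable_on_def)
    thus ?thesis unfolding h_def by (rule integrable_on_mult_right)
  qed
  have bound: "norm (P N x) \<le> h x" if "x \<in> {0<..}" for N x
  proof -
    from that have x: "x > 0" by simp
    have n1: "norm (P N x) = norm (B x) * norm (\<Sum>l<N. of_real (- a * x powr \<xi>) ^ l / fact l :: complex)"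
      using x by (simp add: Peq norm_mult)
    have "norm (\<Sum>l<N. of_real (- a * x powr \<xi>) ^ l / fact l :: complex) \<le> (\<Sum>l<N. (a * x powr \<xi>) ^ l / fact l)"
      by (rule order.trans[OF norm_sum]) (use a in \<open>simp add: norm_divide norm_power norm_mult abs_mult\<close>)
    also have "\<dots> \<le> exp (a * x powr \<xi>)" using a x by (intro exp_partial_le) simp
    finally have n2: "norm (\<Sum>l<N. of_real (- a * x powr \<xi>) ^ l / fact l :: complex) \<le> exp (a * x powr \<xi>)" .
    have n3: "norm (B x) \<le> x powr Re \<mu> * exp (- (e * x))"
      using x by (simp add: B_def norm_mult norm_powr_real_powr abs_cos_le_one mult_left_le)
    have n4: "norm (P N x) \<le> x powr Re \<mu> * exp (- (e * x)) * exp (a * x powr \<xi>)"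
      unfolding n1 by (rule mult_mono[OF n3 n2]) auto
    have "exp (a * x powr \<xi>) \<le> exp ((e/2) * x + C)" using C[of x] x by simp
    hence "x powr Re \<mu> * exp (- (e * x)) * exp (a * x powr \<xi>) \<le> x powr Re \<mu> * exp (- (e * x)) * exp ((e/2) * x + C)"
      by (intro mult_left_mono) auto
    also have "\<dots> = h x" by (simp add: h_def algebra_simps flip: exp_add)
    finally show ?thesis using n4 by linarith
  qed
  have conv: "(\<lambda>N. P N x) \<longlonglongrightarrow> F x" if "x \<in> {0<..}" for x
  proof -
    from that have x: "x > 0" by simp
    have "(\<lambda>l. of_real (- a * x powr \<xi>) ^ l /\<^sub>R fact l) sums exp (of_real (- a * x powr \<xi>) :: complex)"
      by (rule exp_converges)
    hence "(\<lambda>l. of_real (- a * x powr \<xi>) ^ l / fact l) sums exp (of_real (- a * x powr \<xi>) :: complex)"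
      by (simp add: scaleR_conv_of_real divide_inverse mult.commute)
    hence "(\<lambda>l. B x * (of_real (- a * x powr \<xi>) ^ l / fact l)) sums (B x * exp (of_real (- a * x powr \<xi>)))"
      by (rule sums_mult)
    moreover have "B x * exp (of_real (- a * x powr \<xi>)) = F x"
      by (simp add: B_def F_def exp_of_real[symmetric] mult_ac)
    ultimately show ?thesis using x unfolding sums_def by (simp add: Peq sum_distrib_left)
  qed
  have fi: "P N integrable_on {0<..}" for N using Pint by blast
  note DC = dominated_convergence[OF fi hint bound conv]
  show "F integrable_on {0<..}" by (rule DC(1))
  have "integral {0<..} (P N) = (\<Sum>l<N. c l * K l)" for N using Pint[of N] by (rule integral_unique)
  hence "(\<lambda>N. \<Sum>l<N. c l * K l) \<longlonglongrightarrow> integral {0<..} F" using DC(2) by simp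
  thus "(\<lambda>l. (of_real (-a))^l / fact l * (Gamma (s l) * ((of_real e - \<i> * of_real y) powr (-(s l)) + (of_real e + \<i> * of_real y) powr (-(s l))) / 2)) sums integral {0<..} F"
    unfolding sums_def c_def K_def .
qed



lemma b_identity:
  fixes \<mu> :: complex and a \<xi> y :: real and k :: nat assumes y: "y > 0"
  defines "s \<equiv> \<mu> + 1 + of_real (\<xi> * real k)"
  shows "(of_real (-a))^k / fact k * (Gamma s * ((- (\<i> * of_real y)) powr (-s) + (\<i> * of_real y) powr (-s)) / 2)
       = - (of_real y powr (- \<mu> - 1)) * ((1 / fact k) * (of_real (- (a / y powr \<xi>)))^k * Gamma s
           * sin (of_real (pi / 2) * (\<mu> + of_real (\<xi> * real k))))"
proof -
  define w where "w = of_real (pi / 2) * (\<mu> + of_real (\<xi> * real k))"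
  have p1: "(\<i> * of_real y) powr (-s) = of_real y powr (-s) * exp (- (\<i> * (s * of_real pi / 2)))"
  proof -
    have "(\<i> * of_real y) powr (-s) = (of_real y * \<i>) powr (-s)" by (simp add: mult.commute)
    also have "\<dots> = of_real y powr (-s) * \<i> powr (-s)" using y by (intro powr_times_real_left) auto
    also have "\<i> powr (-s) = exp (- (\<i> * (s * of_real pi / 2)))" by (simp add: powr_def algebra_simps)
    finally show ?thesis .
  qed
  have p2: "(- (\<i> * of_real y)) powr (-s) = of_real y powr (-s) * exp (\<i> * (s * of_real pi / 2))"
  proof -
    have "(- (\<i> * of_real y)) powr (-s) = (of_real y * (- \<i>)) powr (-s)" by (simp add: mult.commute)
    also have "\<dots> = of_real y powr (-s) * (- \<i>) powr (-s)" using y by (intro powr_times_real_left) auto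
    also have "(- \<i>) powr (-s) = exp (\<i> * (s * of_real pi / 2))" by (simp add: powr_def algebra_simps)
    finally show ?thesis .
  qed
  have cs: "cos (s * of_real pi / 2) = - sin w"
  proof -
    have "s * of_real pi / 2 = w + of_real (pi / 2)" by (simp add: s_def w_def algebra_simps)
    hence "cos (s * of_real pi / 2) = cos w * cos (of_real (pi / 2)) - sin w * sin (of_real (pi / 2))"
      by (simp only: cos_add)
    also have "cos (of_real (pi / 2)) = (0::complex)" by (simp only: cos_of_real) simp
    also have "sin (of_real (pi / 2)) = (1::complex)" by (simp only: sin_of_real) simp
    finally show ?thesis by simp
  qed
  have sum: "(- (\<i> * of_real y)) powr (-s) + (\<i> * of_real y) powr (-s) = 2 * of_real y powr (-s) * (- sin w)"
    unfolding p1 p2 cs[symmetric] cos_exp_eq[of "s * of_real pi / 2"] by (simp add: algebra_simps)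
  have ys: "of_real y powr (-s) = of_real y powr (- \<mu> - 1) * of_real (inverse ((y powr \<xi>) ^ k))"
  proof -
    have "of_real y powr (-s) = of_real y powr ((- \<mu> - 1) + of_real (- (\<xi> * real k)))"
      by (rule arg_cong[where f="\<lambda>t. of_real y powr t"]) (simp add: s_def algebra_simps)
    also have "\<dots> = of_real y powr (- \<mu> - 1) * of_real y powr (of_real (- (\<xi> * real k)))"
      by (simp only: powr_add)
    also have "of_real y powr (of_real (- (\<xi> * real k))) = (of_real (y powr (- (\<xi> * real k))) :: complex)"
      by (rule powr_of_real) (use y in auto)
    also have "y powr (- (\<xi> * real k)) = inverse ((y powr \<xi>) powr real k)"
      by (simp add: powr_minus powr_powr)
    also have "(y powr \<xi>) powr real k = (y powr \<xi>) ^ k" using y by (simp add: powr_realpow)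
    finally show ?thesis .
  qed
  have yx: "y powr \<xi> > 0" using y by simp
  have pk: "(of_real (- (a / y powr \<xi>)) :: complex)^k = (of_real (-a))^k / (of_real (y powr \<xi>))^k"
    by (simp add: power_divide[symmetric])
  have yk: "(of_real (y powr \<xi>) :: complex)^k \<noteq> 0" using yx by simp
  show ?thesis
    unfolding sum ys w_def[symmetric] pk using yk
    by (simp add: field_simps)
qed



lemma M_summable:
  fixes \<sigma> a \<xi> y :: real
  assumes s: "\<sigma> > -1" and a: "a > 0" and xi: "0 < \<xi>" "\<xi> < 1" and y: "y > 0"
  shows "summable (\<lambda>l. a^l / fact l * Gamma (\<sigma> + 1 + \<xi> * real l) * y powr (-(\<sigma> + 1 + \<xi> * real l)))"
proof -
  obtain C where C: "\<And>x. x \<ge> 0 \<Longrightarrow> a * x powr \<xi> \<le> (y/2) * x + C"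
    using ineq_powr_lin[OF a _ xi, of "y/2"] y by auto
  show ?thesis
proof (rule summableI_nonneg_bounded[where x = "exp C * (Gamma (\<sigma> + 1) * (y/2) powr (-(\<sigma> + 1)))"])
  fix l :: nat
  have "\<sigma> + 1 + \<xi> * real l > 0" using s xi by (smt (verit) mult_nonneg_nonneg of_nat_0_le_iff)
  thus "0 \<le> a^l / fact l * Gamma (\<sigma> + 1 + \<xi> * real l) * y powr (-(\<sigma> + 1 + \<xi> * real l))"
    using a by (intro mult_nonneg_nonneg) auto
next
  fix N :: nat
  define m where "m = (\<lambda>l. a^l / fact l * Gamma (\<sigma> + 1 + \<xi> * real l) * y powr (-(\<sigma> + 1 + \<xi> * real l)))"
  define Q where "Q = (\<lambda>x. \<Sum>l<N. a^l / fact l * (x powr (\<sigma> + \<xi> * real l) * exp (- (y * x))))"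
  define h where "h = (\<lambda>x. exp C * (x powr \<sigma> * exp (- ((y/2) * x))))"
  have Qint: "(Q has_integral (\<Sum>l<N. m l)) {0<..}"
    unfolding Q_def m_def
  proof (intro has_integral_sum, simp)
    fix l assume "l \<in> {..<N}"
    have p: "\<sigma> + \<xi> * real l > -1" using s xi by (smt (verit) mult_nonneg_nonneg of_nat_0_le_iff)
    have e: "\<sigma> + \<xi> * real l + 1 = \<sigma> + 1 + \<xi> * real l" by simp
    from has_integral_mult_right[OF laplace_rr[OF p y], of "a^l / fact l"]
    show "((\<lambda>x. a^l / fact l * (x powr (\<sigma> + \<xi> * real l) * exp (- (y * x)))) has_integral
           a^l / fact l * Gamma (\<sigma> + 1 + \<xi> * real l) * y powr (-(\<sigma> + 1 + \<xi> * real l))) {0<..}"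
      unfolding e by (simp add: mult.assoc)
  qed
  have hint: "(h has_integral exp C * (Gamma (\<sigma> + 1) * (y/2) powr (-(\<sigma> + 1)))) {0<..}"
    unfolding h_def using y by (intro has_integral_mult_right laplace_rr[OF s]) auto
  have le: "Q x \<le> h x" if "x \<in> {0<..}" for x
  proof -
    from that have x: "x > 0" by simp
    have "Q x = x powr \<sigma> * exp (- (y * x)) * (\<Sum>l<N. (a * x powr \<xi>)^l / fact l)"
    proof -
      have "a^l / fact l * (x powr (\<sigma> + \<xi> * real l) * exp (- (y * x))) = x powr \<sigma> * exp (- (y * x)) * ((a * x powr \<xi>)^l / fact l)" for l
      proof -
        have "x powr (\<sigma> + \<xi> * real l) = x powr \<sigma> * (x powr \<xi>) powr real l" by (simp add: powr_add powr_powr)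
        also have "(x powr \<xi>) powr real l = (x powr \<xi>) ^ l" using x by (simp add: powr_realpow)
        finally show ?thesis by (simp add: power_mult_distrib)
      qed
      hence "Q x = (\<Sum>l<N. x powr \<sigma> * exp (- (y * x)) * ((a * x powr \<xi>)^l / fact l))"
        unfolding Q_def by (intro sum.cong) auto
      thus ?thesis by (simp add: sum_distrib_left)
    qed
    also have "\<dots> \<le> x powr \<sigma> * exp (- (y * x)) * exp (a * x powr \<xi>)"
      using a x by (intro mult_left_mono exp_partial_le) auto
    also have "exp (a * x powr \<xi>) \<le> exp ((y/2) * x + C)" using C[of x] x by simp
    hence "x powr \<sigma> * exp (- (y * x)) * exp (a * x powr \<xi>) \<le> x powr \<sigma> * exp (- (y * x)) * exp ((y/2) * x + C)"
      by (intro mult_left_mono) auto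
    also have "x powr \<sigma> * exp (- (y * x)) * exp ((y/2) * x + C) = h x"
      by (simp add: h_def algebra_simps flip: exp_add)
    finally show ?thesis .
  qed
  have "(\<Sum>l<N. m l) \<le> exp C * (Gamma (\<sigma> + 1) * (y/2) powr (-(\<sigma> + 1)))"
    by (rule has_integral_le[OF Qint hint le])
  thus "(\<Sum>l<N. a^l / fact l * Gamma (\<sigma> + 1 + \<xi> * real l) * y powr (-(\<sigma> + 1 + \<xi> * real l))) \<le> exp C * (Gamma (\<sigma> + 1) * (y/2) powr (-(\<sigma> + 1)))"
    unfolding m_def .
qed
qed

theorem mainTheorem1:
  fixes \<mu> :: complex and \<xi> a y :: real
  assumes "Re \<mu> > -1" and "0 < \<xi>" and "\<xi> < 1" and "a > 0" and "y > 0"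
  shows "\<exists>S. (\<lambda>l::nat. (1 / fact l) * (complex_of_real (- (a / y powr \<xi>))) ^ l
              * Gamma (\<mu> + 1 + complex_of_real (\<xi> * real l))
              * sin (complex_of_real (pi / 2) * (\<mu> + complex_of_real (\<xi> * real l)))) sums S
          \<and> ((\<lambda>x::real. (complex_of_real x) powr \<mu> * complex_of_real (exp (- a * x powr \<xi>))
                * complex_of_real (cos (x * y)))
             has_integral (- ((complex_of_real y) powr (- \<mu> - 1)) * S)) {0<..}"
proof -
  note mu = assms(1) and xi = assms(2,3) and a = assms(4) and y = assms(5)
  define s where "s = (\<lambda>l::nat. \<mu> + 1 + of_real (\<xi> * real l))"
  define \<epsilon> where "\<epsilon> = (\<lambda>n::nat. inverse (real (Suc n)))"
  have ep: "\<epsilon> n > 0" for n by (simp add: \<epsilon>_def)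
  define F0 where "F0 = (\<lambda>x::real. (complex_of_real x) powr \<mu> * complex_of_real (exp (- a * x powr \<xi>))
                * complex_of_real (cos (x * y)))"
  define Fn where "Fn = (\<lambda>n x. of_real x powr \<mu> * of_real (exp (- a * x powr \<xi>)) * of_real (cos (x * y)) * complex_of_real (exp (- (\<epsilon> n * x))))"
  define A where "A = (\<lambda>k n. (of_real (-a))^k / fact k * (Gamma (s k) * ((of_real (\<epsilon> n) - \<i> * of_real y) powr (-(s k)) + (of_real (\<epsilon> n) + \<i> * of_real y) powr (-(s k))) / 2))"
  define b where "b = (\<lambda>k. (of_real (-a))^k / fact k * (Gamma (s k) * ((- (\<i> * of_real y)) powr (-(s k)) + (\<i> * of_real y) powr (-(s k))) / 2))"
  have SB1: "Fn n integrable_on {0<..}" for n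
    using stepB(1)[OF mu xi a ep[of n]] unfolding Fn_def .
  have SB2: "(\<lambda>k. A k n) sums integral {0<..} (Fn n)" for n
    using stepB(2)[OF mu xi a ep[of n], of y] unfolding A_def Fn_def s_def .
  define h0 where "h0 = (\<lambda>x. x powr Re \<mu> * exp (- (a * x powr \<xi>)))"
  have h0i: "h0 integrable_on {0<..}" unfolding h0_def using mu a xi by (intro integrable_h0) auto
  have h0b: "norm (Fn n x) \<le> h0 x" if "x \<in> {0<..}" for n x
  proof -
    from that have x: "x > 0" by simp
    have "norm (Fn n x) = x powr Re \<mu> * exp (- (a * x powr \<xi>)) * (\<bar>cos (x * y)\<bar> * exp (- (\<epsilon> n * x)))"
      using x by (simp add: Fn_def norm_mult norm_powr_real_powr)
    also have "\<dots> \<le> x powr Re \<mu> * exp (- (a * x powr \<xi>)) * 1"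
    proof (intro mult_left_mono)
      have "exp (- (\<epsilon> n * x)) \<le> 1" using ep[of n] x by simp
      thus "\<bar>cos (x * y)\<bar> * exp (- (\<epsilon> n * x)) \<le> 1"
        using abs_cos_le_one[of "x*y"] by (simp add: mult_le_one)
    qed auto
    finally show ?thesis by (simp add: h0_def)
  qed
  have ep0: "\<epsilon> \<longlonglongrightarrow> 0" unfolding \<epsilon>_def by (rule LIMSEQ_inverse_real_of_nat)
  have Fconv: "(\<lambda>n. Fn n x) \<longlonglongrightarrow> F0 x" if "x \<in> {0<..}" for x
  proof -
    have "(\<lambda>n. of_real x powr \<mu> * of_real (exp (- a * x powr \<xi>)) * of_real (cos (x * y)) * complex_of_real (exp (- (\<epsilon> n * x))))
        \<longlonglongrightarrow> of_real x powr \<mu> * of_real (exp (- a * x powr \<xi>)) * of_real (cos (x * y)) * complex_of_real (exp (- (0 * x)))"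
      by (intro tendsto_intros ep0)
    thus ?thesis by (simp add: Fn_def F0_def)
  qed
  note DC = dominated_convergence[OF SB1 h0i h0b Fconv]
  have lim1: "(\<lambda>n. integral {0<..} (Fn n)) \<longlonglongrightarrow> integral {0<..} F0" by (rule DC(2))
  define E where "E = exp (pi / 2 * \<bar>Im \<mu>\<bar>)"
  define M where "M = (\<lambda>k. (a^k / fact k * Gamma (Re \<mu> + 1 + \<xi> * real k) * y powr (-(Re \<mu> + 1 + \<xi> * real k))) * E)"
  have Msum: "summable M" unfolding M_def
    by (intro summable_mult2 M_summable) (use mu a xi y in auto)
  have sRe: "Re (s k) = Re \<mu> + 1 + \<xi> * real k" for k by (simp add: s_def)
  have sIm: "Im (s k) = Im \<mu>" for k by (simp add: s_def)
  have sp: "Re (s k) > 0" for k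
  proof -
    have "\<xi> * real k \<ge> 0" using xi by simp
    thus ?thesis using mu by (simp add: sRe)
  qed
  have Abound: "norm (A k n) \<le> M k" for k n
  proof -
    have z1: "norm ((of_real (\<epsilon> n) - \<i> * of_real y) powr (-(s k))) \<le> y powr (-Re (s k)) * E"
    proof -
      have "cmod (of_real (\<epsilon> n) - \<i> * of_real y) \<ge> y"
        using abs_Im_le_cmod[of "of_real (\<epsilon> n) - \<i> * of_real y"] y by simp
      hence "norm ((of_real (\<epsilon> n) - \<i> * of_real y) powr (-(s k))) \<le> y powr (-Re (s k)) * exp (pi / 2 * \<bar>Im (s k)\<bar>)"
        using ep[of n] y by (intro powr_norm_bound sp) auto
      thus ?thesis by (simp add: E_def sIm)
    qed
    have z2: "norm ((of_real (\<epsilon> n) + \<i> * of_real y) powr (-(s k))) \<le> y powr (-Re (s k)) * E"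
    proof -
      have "cmod (of_real (\<epsilon> n) + \<i> * of_real y) \<ge> y"
        using abs_Im_le_cmod[of "of_real (\<epsilon> n) + \<i> * of_real y"] y by simp
      hence "norm ((of_real (\<epsilon> n) + \<i> * of_real y) powr (-(s k))) \<le> y powr (-Re (s k)) * exp (pi / 2 * \<bar>Im (s k)\<bar>)"
        using ep[of n] y by (intro powr_norm_bound sp) auto
      thus ?thesis by (simp add: E_def sIm)
    qed
    have g: "norm (Gamma (s k)) \<le> Gamma (Re (s k))" by (rule gamma_norm_le[OF sp])
    have "norm ((of_real (\<epsilon> n) - \<i> * of_real y) powr (-(s k)) + (of_real (\<epsilon> n) + \<i> * of_real y) powr (-(s k))) / 2
        \<le> y powr (-Re (s k)) * E"
      using norm_triangle_ineq[of "(of_real (\<epsilon> n) - \<i> * of_real y) powr (-(s k))" "(of_real (\<epsilon> n) + \<i> * of_real y) powr (-(s k))"] z1 z2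
      by linarith
    hence "norm (Gamma (s k)) * (norm ((of_real (\<epsilon> n) - \<i> * of_real y) powr (-(s k)) + (of_real (\<epsilon> n) + \<i> * of_real y) powr (-(s k))) / 2)
        \<le> Gamma (Re (s k)) * (y powr (-Re (s k)) * E)"
      using g sp[of k] by (intro mult_mono) auto
    hence "a^k / fact k * (norm (Gamma (s k)) * (norm ((of_real (\<epsilon> n) - \<i> * of_real y) powr (-(s k)) + (of_real (\<epsilon> n) + \<i> * of_real y) powr (-(s k))) / 2))
        \<le> a^k / fact k * (Gamma (Re (s k)) * (y powr (-Re (s k)) * E))"
      using a by (intro mult_left_mono) auto
    thus ?thesis unfolding A_def M_def sRe[symmetric]
      using a by (simp add: norm_mult norm_divide norm_power mult_ac)
  qed
  have ny: "- (\<i> * of_real y) \<notin> \<real>\<^sub>\<le>\<^sub>0" "\<i> * of_real y \<notin> \<real>\<^sub>\<le>\<^sub>0"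
    using y by (auto simp: complex_nonpos_Reals_iff)
  have Alim: "(\<lambda>n. A k n) \<longlonglongrightarrow> b k" for k
  proof -
    have l1: "(\<lambda>n. of_real (\<epsilon> n) - \<i> * of_real y) \<longlonglongrightarrow> - (\<i> * of_real y)"
      using tendsto_diff[OF tendsto_of_real[OF ep0] tendsto_const[of "\<i> * of_real y"]] by simp
    have l2: "(\<lambda>n. of_real (\<epsilon> n) + \<i> * of_real y) \<longlonglongrightarrow> \<i> * of_real y"
      using tendsto_add[OF tendsto_of_real[OF ep0] tendsto_const[of "\<i> * of_real y"]] by simp
    show ?thesis unfolding A_def b_def
      by (intro tendsto_intros) (use ny l1 l2 in auto)
  qed
  have T: "eventually (\<lambda>n. summable (\<lambda>k. norm (A k n))) sequentially \<and>
           summable (\<lambda>n. norm (b n)) \<and> ((\<lambda>n. suminf (\<lambda>k. A k n)) \<longlonglongrightarrow> suminf b)"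
    by (rule tannerys_theorem[OF Alim _ Msum]) (auto intro!: always_eventually simp: Abound)
  have "(\<lambda>n. integral {0<..} (Fn n)) \<longlonglongrightarrow> suminf b"
    using T SB2 by (simp add: sums_iff)
  hence Ib: "integral {0<..} F0 = suminf b" using lim1 LIMSEQ_unique by blast
  have "summable (\<lambda>n. norm (b n))" using T by blast
  hence bsum: "b sums suminf b" by (intro summable_sums) (rule summable_norm_cancel)
  define Y where "Y = (complex_of_real y) powr (- \<mu> - 1)"
  have Y0: "Y \<noteq> 0" using y by (simp add: Y_def)
  define T where "T = (\<lambda>l::nat. (1 / fact l) * (complex_of_real (- (a / y powr \<xi>))) ^ l
              * Gamma (\<mu> + 1 + complex_of_real (\<xi> * real l))
              * sin (complex_of_real (pi / 2) * (\<mu> + complex_of_real (\<xi> * real l))))"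
  have bT: "b l = - Y * T l" for l
    unfolding b_def s_def Y_def T_def using b_identity[OF y, where a=a and k=l and \<mu>=\<mu> and \<xi>=\<xi>] by simp
  have "T sums (suminf b / (- Y))"
  proof -
    have "(\<lambda>l. b l / (- Y)) sums (suminf b / (- Y))" by (rule sums_divide[OF bsum])
    moreover have "b l / (- Y) = T l" for l using Y0 by (simp add: bT)
    ultimately show ?thesis by simp
  qed
  moreover have "(F0 has_integral (- Y * (suminf b / (- Y)))) {0<..}"
  proof -
    have "(F0 has_integral integral {0<..} F0) {0<..}" using DC(1) by (rule integrable_integral)
    thus ?thesis using Ib Y0 by simp
  qed
  ultimately show ?thesis unfolding T_def F0_def Y_def by blast
qed


end
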